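(* Let $f$ be the polynomial $$f(t)=\frac{2431}{80}t^9-\frac{1287}{20}t^7+\frac{18333}{400}t^5+\frac{343}{40}t^4-\frac{83}{10}t^3-\frac{213}{100}t^2+\frac{t}{10}-\frac{1}{200},$$ let $-t_0$ (with $t_0\approx 0.5907$) be the unique root of $f$ in $[-1,1/2]$, and let $\theta_0=\arccos t_0\approx 53.794^\circ$. Let $e_0\in\mathbf{S}^2$ and let $y_1,\dots,y_m\in\mathbf{S}^2$ satisfy $\mathrm{dist}(y_i,y_j)\ge60^\circ$ for all $i\ne j$ and $\mathrm{dist}(e_0,y_i)<\theta_0$ for all $i$. Then $m\le 4$.
   Context: $\mathrm{dist}$ denotes the angular (spherical) distance on the unit sphere $\mathbf{S}^2\subset\mathbb{R}^3$. *)

theory Defs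
  imports "HOL-Analysis.Analysis"
begin

definition S2 :: "(real^3) set" where
  "S2 = {x. norm x = 1}"

definition sdist :: "real^3 \<Rightarrow> real^3 \<Rightarrow> real" where
  "sdist x y = arccos (x \<bullet> y)"

definition fpoly :: "real \<Rightarrow> real" where
  "fpoly t = 2431/80 * t^9 - 1287/20 * t^7 + 18333/400 * t^5 + 343/40 * t^4
             - 83/10 * t^3 - 213/100 * t^2 + t/10 - 1/200"

definition t0 :: real where
  "t0 = - (THE s. s \<in> {-1..1/2} \<and> fpoly s = 0)"

definition theta0 :: real where
  "theta0 = arccos t0"

end

theory Submission imports Defs begin

definition fpd :: "real \<Rightarrow> real" where "fpd x = (1/10) + (- 213/50) * x + (- 249/10) * x^2 + (343/10) * x^3 + (18333/80) * x^4 + (- 9009/20) * x^6 + (21879/80) * x^8"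
lemma fpoly_shift: "fpoly (h + a) = ((-1/200) + (1/10) * a + (-213/100) * a^2 + (-83/10) * a^3 + (343/40) * a^4 + (18333/400) * a^5 + (-1287/20) * a^7 + (2431/80) * a^9) + ((1/10) + (-213/50) * a + (-249/10) * a^2 + (343/10) * a^3 + (18333/80) * a^4 + (-9009/20) * a^6 + (21879/80) * a^8) * h + ((-213/100) + (-249/10) * a + (1029/20) * a^2 + (18333/40) * a^3 + (-27027/20) * a^5 + (21879/20) * a^7) * h^2 + ((-83/10) + (343/10) * a + (18333/40) * a^2 + (-9009/4) * a^4 + (51051/20) * a^6) * h^3 + ((343/40) + (18333/80) * a + (-9009/4) * a^3 + (153153/40) * a^5) * h^4 + ((18333/400) + (-27027/20) * a^2 + (153153/40) * a^4) * h^5 + ((-9009/20) * a + (51051/20) * a^3) * h^6 + ((-1287/20) + (21879/20) * a^2) * h^7 + ((21879/80) * a) * h^8 + ((2431/80)) * h^9"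
  unfolding fpoly_def apply (simp add: field_simps) apply (simp add: algebra_simps numeral_eq_Suc power_Suc) done
lemma fpd_shift: "fpd (h + a) = ((1/10) + (-213/50) * a + (-249/10) * a^2 + (343/10) * a^3 + (18333/80) * a^4 + (-9009/20) * a^6 + (21879/80) * a^8) + ((-213/50) + (-249/5) * a + (1029/10) * a^2 + (18333/20) * a^3 + (-27027/10) * a^5 + (21879/10) * a^7) * h + ((-249/10) + (1029/10) * a + (54999/40) * a^2 + (-27027/4) * a^4 + (153153/20) * a^6) * h^2 + ((343/10) + (18333/20) * a + (-9009) * a^3 + (153153/10) * a^5) * h^3 + ((18333/80) + (-27027/4) * a^2 + (153153/8) * a^4) * h^4 + ((-27027/10) * a + (153153/10) * a^3) * h^5 + ((-9009/20) + (153153/20) * a^2) * h^6 + ((21879/10) * a) * h^7 + ((21879/80)) * h^8"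
  unfolding fpd_def apply (simp add: field_simps) apply (simp add: algebra_simps numeral_eq_Suc power_Suc) done
lemma fpos_0: fixes x :: real assumes "(-1) \<le> x" "x \<le> (-79/100)" shows "0 < fpoly x"
proof -
  define h where "h = x - (-179/200)"
  have x: "x = h + (-179/200)" by (simp add: h_def)
  have hw: "\<bar>h\<bar> \<le> (21/200)" unfolding h_def abs_le_iff using assms by linarith
  have h0: "0 \<le> \<bar>h\<bar>" by simp
  have e: "fpoly (h + (-179/200)) = (71100332663173340894611/40960000000000000000000) + (- 2561096464933957863081/204800000000000000000) * h + (1434671354975565939/256000000000000000) * h^2 + (249511275850861971/1280000000000000) * h^3 + (- 9991971702672547/12800000000000) * h^4 + (90886314362193/64000000000) * h^5 + (- 228290351289/160000000) * h^6 + (649545039/800000) * h^7 + (- 3916341/16000) * h^8 + (2431/80) * h^9"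
    unfolding fpoly_shift by (simp add: power_divide)
  have "\<bar>h\<bar>^1 \<le> (21/200)^1" by (rule power_mono[OF hw h0])
  then have p1: "- (21/200) \<le> h^1" "h^1 \<le> (21/200)" by (simp_all add: power_abs[symmetric] power_divide abs_le_iff)
  have "\<bar>h\<bar>^2 \<le> (21/200)^2" by (rule power_mono[OF hw h0])
  then have p2: "0 \<le> h^2" "h^2 \<le> (441/40000)" by (simp_all add: power_abs[symmetric] power_divide)
  have "\<bar>h\<bar>^3 \<le> (21/200)^3" by (rule power_mono[OF hw h0])
  then have p3: "- (9261/8000000) \<le> h^3" "h^3 \<le> (9261/8000000)" by (simp_all add: power_abs[symmetric] power_divide abs_le_iff)
  have "\<bar>h\<bar>^4 \<le> (21/200)^4" by (rule power_mono[OF hw h0])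
  then have p4: "0 \<le> h^4" "h^4 \<le> (194481/1600000000)" by (simp_all add: power_abs[symmetric] power_divide)
  have "\<bar>h\<bar>^5 \<le> (21/200)^5" by (rule power_mono[OF hw h0])
  then have p5: "- (4084101/320000000000) \<le> h^5" "h^5 \<le> (4084101/320000000000)" by (simp_all add: power_abs[symmetric] power_divide abs_le_iff)
  have "\<bar>h\<bar>^6 \<le> (21/200)^6" by (rule power_mono[OF hw h0])
  then have p6: "0 \<le> h^6" "h^6 \<le> (85766121/64000000000000)" by (simp_all add: power_abs[symmetric] power_divide)
  have "\<bar>h\<bar>^7 \<le> (21/200)^7" by (rule power_mono[OF hw h0])
  then have p7: "- (1801088541/12800000000000000) \<le> h^7" "h^7 \<le> (1801088541/12800000000000000)" by (simp_all add: power_abs[symmetric] power_divide abs_le_iff)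
  have "\<bar>h\<bar>^8 \<le> (21/200)^8" by (rule power_mono[OF hw h0])
  then have p8: "0 \<le> h^8" "h^8 \<le> (37822859361/2560000000000000000)" by (simp_all add: power_abs[symmetric] power_divide)
  have "\<bar>h\<bar>^9 \<le> (21/200)^9" by (rule power_mono[OF hw h0])
  then have p9: "- (794280046581/512000000000000000000) \<le> h^9" "h^9 \<le> (794280046581/512000000000000000000)" by (simp_all add: power_abs[symmetric] power_divide abs_le_iff)
  show ?thesis unfolding x e using h0 hw p1 p2 p3 p4 p5 p6 p7 p8 p9 by linarith
qed

lemma fpos_1: fixes x :: real assumes "(-79/100) \<le> x" "x \<le> (-277/400)" shows "0 < fpoly x"
proof -
  define h where "h = x - (-593/800)"
  have x: "x = h + (-593/800)" by (simp add: h_def)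
  have hw: "\<bar>h\<bar> \<le> (39/800)" unfolding h_def abs_le_iff using assms by linarith
  have h0: "0 \<le> \<bar>h\<bar>" by simp
  have e: "fpoly (h + (-593/800)) = (3464149432095913264325691217/10737418240000000000000000000) + (- 67154292519877830464224521/13421772800000000000000000) * h + (108327641354523323639097/4194304000000000000000) * h^2 + (- 201503273400158266101/5242880000000000000) * h^3 + (- 1321363816219416529/13107200000000000) * h^4 + (7524220712250753/16384000000000) * h^5 + (- 7226459947707/10240000000) * h^6 + (6870048471/12800000) * h^7 + (- 12974247/64000) * h^8 + (2431/80) * h^9"
    unfolding fpoly_shift by (simp add: power_divide)
  have "\<bar>h\<bar>^1 \<le> (39/800)^1" by (rule power_mono[OF hw h0])
  then have p1: "- (39/800) \<le> h^1" "h^1 \<le> (39/800)" by (simp_all add: power_abs[symmetric] power_divide abs_le_iff)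
  have "\<bar>h\<bar>^2 \<le> (39/800)^2" by (rule power_mono[OF hw h0])
  then have p2: "0 \<le> h^2" "h^2 \<le> (1521/640000)" by (simp_all add: power_abs[symmetric] power_divide)
  have "\<bar>h\<bar>^3 \<le> (39/800)^3" by (rule power_mono[OF hw h0])
  then have p3: "- (59319/512000000) \<le> h^3" "h^3 \<le> (59319/512000000)" by (simp_all add: power_abs[symmetric] power_divide abs_le_iff)
  have "\<bar>h\<bar>^4 \<le> (39/800)^4" by (rule power_mono[OF hw h0])
  then have p4: "0 \<le> h^4" "h^4 \<le> (2313441/409600000000)" by (simp_all add: power_abs[symmetric] power_divide)
  have "\<bar>h\<bar>^5 \<le> (39/800)^5" by (rule power_mono[OF hw h0])
  then have p5: "- (90224199/327680000000000) \<le> h^5" "h^5 \<le> (90224199/327680000000000)" by (simp_all add: power_abs[symmetric] power_divide abs_le_iff)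
  have "\<bar>h\<bar>^6 \<le> (39/800)^6" by (rule power_mono[OF hw h0])
  then have p6: "0 \<le> h^6" "h^6 \<le> (3518743761/262144000000000000)" by (simp_all add: power_abs[symmetric] power_divide)
  have "\<bar>h\<bar>^7 \<le> (39/800)^7" by (rule power_mono[OF hw h0])
  then have p7: "- (137231006679/209715200000000000000) \<le> h^7" "h^7 \<le> (137231006679/209715200000000000000)" by (simp_all add: power_abs[symmetric] power_divide abs_le_iff)
  have "\<bar>h\<bar>^8 \<le> (39/800)^8" by (rule power_mono[OF hw h0])
  then have p8: "0 \<le> h^8" "h^8 \<le> (5352009260481/167772160000000000000000)" by (simp_all add: power_abs[symmetric] power_divide)
  have "\<bar>h\<bar>^9 \<le> (39/800)^9" by (rule power_mono[OF hw h0])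
  then have p9: "- (208728361158759/134217728000000000000000000) \<le> h^9" "h^9 \<le> (208728361158759/134217728000000000000000000)" by (simp_all add: power_abs[symmetric] power_divide abs_le_iff)
  show ?thesis unfolding x e using h0 hw p1 p2 p3 p4 p5 p6 p7 p8 p9 by linarith
qed

lemma fpos_2: fixes x :: real assumes "(-277/400) \<le> x" "x \<le> (-127/200)" shows "0 < fpoly x"
proof -
  define h where "h = x - (-531/800)"
  have x: "x = h + (-531/800)" by (simp add: h_def)
  have hw: "\<bar>h\<bar> \<le> (23/800)" unfolding h_def abs_le_iff using assms by linarith
  have h0: "0 \<le> \<bar>h\<bar>" by simp
  have e: "fpoly (h + (-531/800)) = (747322276817489164926509299/10737418240000000000000000000) + (- 24274589342475195630792361/13421772800000000000000000) * h + (63101608222429244798931/4194304000000000000000) * h^2 + (- 251792730553450028269/5242880000000000000) * h^3 + (285832381584454397/13107200000000000) * h^4 + (3172573599397713/16384000000000) * h^5 + (- 4581803066841/10240000000) * h^6 + (5345344719/12800000) * h^7 + (- 11617749/64000) * h^8 + (2431/80) * h^9"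
    unfolding fpoly_shift by (simp add: power_divide)
  have "\<bar>h\<bar>^1 \<le> (23/800)^1" by (rule power_mono[OF hw h0])
  then have p1: "- (23/800) \<le> h^1" "h^1 \<le> (23/800)" by (simp_all add: power_abs[symmetric] power_divide abs_le_iff)
  have "\<bar>h\<bar>^2 \<le> (23/800)^2" by (rule power_mono[OF hw h0])
  then have p2: "0 \<le> h^2" "h^2 \<le> (529/640000)" by (simp_all add: power_abs[symmetric] power_divide)
  have "\<bar>h\<bar>^3 \<le> (23/800)^3" by (rule power_mono[OF hw h0])
  then have p3: "- (12167/512000000) \<le> h^3" "h^3 \<le> (12167/512000000)" by (simp_all add: power_abs[symmetric] power_divide abs_le_iff)
  have "\<bar>h\<bar>^4 \<le> (23/800)^4" by (rule power_mono[OF hw h0])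
  then have p4: "0 \<le> h^4" "h^4 \<le> (279841/409600000000)" by (simp_all add: power_abs[symmetric] power_divide)
  have "\<bar>h\<bar>^5 \<le> (23/800)^5" by (rule power_mono[OF hw h0])
  then have p5: "- (6436343/327680000000000) \<le> h^5" "h^5 \<le> (6436343/327680000000000)" by (simp_all add: power_abs[symmetric] power_divide abs_le_iff)
  have "\<bar>h\<bar>^6 \<le> (23/800)^6" by (rule power_mono[OF hw h0])
  then have p6: "0 \<le> h^6" "h^6 \<le> (148035889/262144000000000000)" by (simp_all add: power_abs[symmetric] power_divide)
  have "\<bar>h\<bar>^7 \<le> (23/800)^7" by (rule power_mono[OF hw h0])
  then have p7: "- (3404825447/209715200000000000000) \<le> h^7" "h^7 \<le> (3404825447/209715200000000000000)" by (simp_all add: power_abs[symmetric] power_divide abs_le_iff)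
  have "\<bar>h\<bar>^8 \<le> (23/800)^8" by (rule power_mono[OF hw h0])
  then have p8: "0 \<le> h^8" "h^8 \<le> (78310985281/167772160000000000000000)" by (simp_all add: power_abs[symmetric] power_divide)
  have "\<bar>h\<bar>^9 \<le> (23/800)^9" by (rule power_mono[OF hw h0])
  then have p9: "- (1801152661463/134217728000000000000000000) \<le> h^9" "h^9 \<le> (1801152661463/134217728000000000000000000)" by (simp_all add: power_abs[symmetric] power_divide abs_le_iff)
  show ?thesis unfolding x e using h0 hw p1 p2 p3 p4 p5 p6 p7 p8 p9 by linarith
qed

lemma fpos_3: fixes x :: real assumes "(-127/200) \<le> x" "x \<le> (-121/200)" shows "0 < fpoly x"
proof -
  define h where "h = x - (-31/50)"
  have x: "x = h + (-31/50)" by (simp add: h_def)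
  have hw: "\<bar>h\<bar> \<le> (3/200)" unfolding h_def abs_le_iff using assms by linarith
  have h0: "0 \<le> \<bar>h\<bar>" by simp
  have e: "fpoly (h + (-31/50)) = (2399404907228799/156250000000000000) + (- 2367270531868361/3125000000000000) * h + (142665729182931/15625000000000) * h^2 + (- 12875142568769/312500000000) * h^3 + (656215736897/12500000000) * h^4 + (23033401713/250000000) * h^5 + (- 822662841/2500000) * h^6 + (17808219/50000) * h^7 + (- 678249/4000) * h^8 + (2431/80) * h^9"
    unfolding fpoly_shift by (simp add: power_divide)
  have "\<bar>h\<bar>^1 \<le> (3/200)^1" by (rule power_mono[OF hw h0])
  then have p1: "- (3/200) \<le> h^1" "h^1 \<le> (3/200)" by (simp_all add: power_abs[symmetric] power_divide abs_le_iff)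
  have "\<bar>h\<bar>^2 \<le> (3/200)^2" by (rule power_mono[OF hw h0])
  then have p2: "0 \<le> h^2" "h^2 \<le> (9/40000)" by (simp_all add: power_abs[symmetric] power_divide)
  have "\<bar>h\<bar>^3 \<le> (3/200)^3" by (rule power_mono[OF hw h0])
  then have p3: "- (27/8000000) \<le> h^3" "h^3 \<le> (27/8000000)" by (simp_all add: power_abs[symmetric] power_divide abs_le_iff)
  have "\<bar>h\<bar>^4 \<le> (3/200)^4" by (rule power_mono[OF hw h0])
  then have p4: "0 \<le> h^4" "h^4 \<le> (81/1600000000)" by (simp_all add: power_abs[symmetric] power_divide)
  have "\<bar>h\<bar>^5 \<le> (3/200)^5" by (rule power_mono[OF hw h0])
  then have p5: "- (243/320000000000) \<le> h^5" "h^5 \<le> (243/320000000000)" by (simp_all add: power_abs[symmetric] power_divide abs_le_iff)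
  have "\<bar>h\<bar>^6 \<le> (3/200)^6" by (rule power_mono[OF hw h0])
  then have p6: "0 \<le> h^6" "h^6 \<le> (729/64000000000000)" by (simp_all add: power_abs[symmetric] power_divide)
  have "\<bar>h\<bar>^7 \<le> (3/200)^7" by (rule power_mono[OF hw h0])
  then have p7: "- (2187/12800000000000000) \<le> h^7" "h^7 \<le> (2187/12800000000000000)" by (simp_all add: power_abs[symmetric] power_divide abs_le_iff)
  have "\<bar>h\<bar>^8 \<le> (3/200)^8" by (rule power_mono[OF hw h0])
  then have p8: "0 \<le> h^8" "h^8 \<le> (6561/2560000000000000000)" by (simp_all add: power_abs[symmetric] power_divide)
  have "\<bar>h\<bar>^9 \<le> (3/200)^9" by (rule power_mono[OF hw h0])
  then have p9: "- (19683/512000000000000000000) \<le> h^9" "h^9 \<le> (19683/512000000000000000000)" by (simp_all add: power_abs[symmetric] power_divide abs_le_iff)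
  show ?thesis unfolding x e using h0 hw p1 p2 p3 p4 p5 p6 p7 p8 p9 by linarith
qed

lemma fpos_4: fixes x :: real assumes "(-121/200) \<le> x" "x \<le> (-3/5)" shows "0 < fpoly x"
proof -
  define h where "h = x - (-121/200)"
  have x: "x = h + (-121/200)" by (simp add: h_def)
  have h0: "0 \<le> h" and hw: "h \<le> (1/200)" using assms by (simp_all add: h_def)
  have e: "fpoly (h + (-121/200)) = (242128968238811989689/40960000000000000000000) + (- 104588925938822929481/204800000000000000000) * h + (1881682608281350161/256000000000000000) * h^2 + (- 48467082325816229/1280000000000000) * h^3 + (746728429683047/12800000000000) * h^4 + (4106801141793/64000000000) * h^5 + (- 46836400611/160000000) * h^6 + (268850439/800000) * h^7 + (- 2647359/16000) * h^8 + (2431/80) * h^9"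
    unfolding fpoly_shift by (simp add: power_divide)
  have "h^2 \<le> (1/200)^2" by (rule power_mono[OF hw h0])
  then have p2: "0 \<le> h^2" "h^2 \<le> (1/40000)" using h0 by (simp_all add: power_divide)
  have "h^3 \<le> (1/200)^3" by (rule power_mono[OF hw h0])
  then have p3: "0 \<le> h^3" "h^3 \<le> (1/8000000)" using h0 by (simp_all add: power_divide)
  have "h^4 \<le> (1/200)^4" by (rule power_mono[OF hw h0])
  then have p4: "0 \<le> h^4" "h^4 \<le> (1/1600000000)" using h0 by (simp_all add: power_divide)
  have "h^5 \<le> (1/200)^5" by (rule power_mono[OF hw h0])
  then have p5: "0 \<le> h^5" "h^5 \<le> (1/320000000000)" using h0 by (simp_all add: power_divide)
  have "h^6 \<le> (1/200)^6" by (rule power_mono[OF hw h0])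
  then have p6: "0 \<le> h^6" "h^6 \<le> (1/64000000000000)" using h0 by (simp_all add: power_divide)
  have "h^7 \<le> (1/200)^7" by (rule power_mono[OF hw h0])
  then have p7: "0 \<le> h^7" "h^7 \<le> (1/12800000000000000)" using h0 by (simp_all add: power_divide)
  have "h^8 \<le> (1/200)^8" by (rule power_mono[OF hw h0])
  then have p8: "0 \<le> h^8" "h^8 \<le> (1/2560000000000000000)" using h0 by (simp_all add: power_divide)
  have "h^9 \<le> (1/200)^9" by (rule power_mono[OF hw h0])
  then have p9: "0 \<le> h^9" "h^9 \<le> (1/512000000000000000000)" using h0 by (simp_all add: power_divide)
  show ?thesis unfolding x e using h0 hw p2 p3 p4 p5 p6 p7 p8 p9 by linarith
qed

lemma fpos: fixes x :: real assumes "(-1) \<le> x" "x \<le> (-3/5)" shows "0 < fpoly x"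
proof -
  have "((-1) \<le> x \<and> x \<le> (-79/100)) \<or> ((-79/100) \<le> x \<and> x \<le> (-277/400)) \<or> ((-277/400) \<le> x \<and> x \<le> (-127/200)) \<or> ((-127/200) \<le> x \<and> x \<le> (-121/200)) \<or> ((-121/200) \<le> x \<and> x \<le> (-3/5))" using assms by linarith
  then show ?thesis using fpos_0 fpos_1 fpos_2 fpos_3 fpos_4 by blast
qed
lemma fneg_0: fixes x :: real assumes "(-29/50) \<le> x" "x \<le> (-1/2)" shows "fpoly x < 0"
proof -
  define h where "h = x - (-27/50)"
  have x: "x = h + (-27/50)" by (simp add: h_def)
  have hw: "\<bar>h\<bar> \<le> (1/25)" unfolding h_def abs_le_iff using assms by linarith
  have h0: "0 \<le> \<bar>h\<bar>" by simp
  have e: "fpoly (h + (-27/50)) = (- 864307427143397/156250000000000000) + (102690555907799/3125000000000000) * h + (24237896619063/15625000000000) * h^2 + (- 6685705603561/312500000000) * h^3 + (795866146229/12500000000) * h^4 + (- 5663506527/250000000) * h^5 + (- 396729333/2500000) * h^6 + (12732291/50000) * h^7 + (- 590733/4000) * h^8 + (2431/80) * h^9"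
    unfolding fpoly_shift by (simp add: power_divide)
  have "\<bar>h\<bar>^1 \<le> (1/25)^1" by (rule power_mono[OF hw h0])
  then have p1: "- (1/25) \<le> h^1" "h^1 \<le> (1/25)" by (simp_all add: power_abs[symmetric] power_divide abs_le_iff)
  have "\<bar>h\<bar>^2 \<le> (1/25)^2" by (rule power_mono[OF hw h0])
  then have p2: "0 \<le> h^2" "h^2 \<le> (1/625)" by (simp_all add: power_abs[symmetric] power_divide)
  have "\<bar>h\<bar>^3 \<le> (1/25)^3" by (rule power_mono[OF hw h0])
  then have p3: "- (1/15625) \<le> h^3" "h^3 \<le> (1/15625)" by (simp_all add: power_abs[symmetric] power_divide abs_le_iff)
  have "\<bar>h\<bar>^4 \<le> (1/25)^4" by (rule power_mono[OF hw h0])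
  then have p4: "0 \<le> h^4" "h^4 \<le> (1/390625)" by (simp_all add: power_abs[symmetric] power_divide)
  have "\<bar>h\<bar>^5 \<le> (1/25)^5" by (rule power_mono[OF hw h0])
  then have p5: "- (1/9765625) \<le> h^5" "h^5 \<le> (1/9765625)" by (simp_all add: power_abs[symmetric] power_divide abs_le_iff)
  have "\<bar>h\<bar>^6 \<le> (1/25)^6" by (rule power_mono[OF hw h0])
  then have p6: "0 \<le> h^6" "h^6 \<le> (1/244140625)" by (simp_all add: power_abs[symmetric] power_divide)
  have "\<bar>h\<bar>^7 \<le> (1/25)^7" by (rule power_mono[OF hw h0])
  then have p7: "- (1/6103515625) \<le> h^7" "h^7 \<le> (1/6103515625)" by (simp_all add: power_abs[symmetric] power_divide abs_le_iff)
  have "\<bar>h\<bar>^8 \<le> (1/25)^8" by (rule power_mono[OF hw h0])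
  then have p8: "0 \<le> h^8" "h^8 \<le> (1/152587890625)" by (simp_all add: power_abs[symmetric] power_divide)
  have "\<bar>h\<bar>^9 \<le> (1/25)^9" by (rule power_mono[OF hw h0])
  then have p9: "- (1/3814697265625) \<le> h^9" "h^9 \<le> (1/3814697265625)" by (simp_all add: power_abs[symmetric] power_divide abs_le_iff)
  show ?thesis unfolding x e using h0 hw p1 p2 p3 p4 p5 p6 p7 p8 p9 by linarith
qed

lemma fneg_1: fixes x :: real assumes "(-1/2) \<le> x" "x \<le> (-9/20)" shows "fpoly x < 0"
proof -
  define h where "h = x - (-19/40)"
  have x: "x = h + (-19/40)" by (simp add: h_def)
  have hw: "\<bar>h\<bar> \<le> (1/40)" unfolding h_def abs_le_iff using assms by linarith
  have h0: "0 \<le> \<bar>h\<bar>" by simp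
  have e: "fpoly (h + (-19/40)) = (- 33923318209549/20971520000000000) + (15881099108439/524288000000000) * h + (- 3622322060781/3276800000000) * h^2 + (- 534060801069/81920000000) * h^3 + (198726345853/4096000000) * h^4 + (- 6569290287/102400000) * h^5 + (- 76285209/1280000) * h^6 + (5839119/32000) * h^7 + (- 415701/3200) * h^8 + (2431/80) * h^9"
    unfolding fpoly_shift by (simp add: power_divide)
  have "\<bar>h\<bar>^1 \<le> (1/40)^1" by (rule power_mono[OF hw h0])
  then have p1: "- (1/40) \<le> h^1" "h^1 \<le> (1/40)" by (simp_all add: power_abs[symmetric] power_divide abs_le_iff)
  have "\<bar>h\<bar>^2 \<le> (1/40)^2" by (rule power_mono[OF hw h0])
  then have p2: "0 \<le> h^2" "h^2 \<le> (1/1600)" by (simp_all add: power_abs[symmetric] power_divide)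
  have "\<bar>h\<bar>^3 \<le> (1/40)^3" by (rule power_mono[OF hw h0])
  then have p3: "- (1/64000) \<le> h^3" "h^3 \<le> (1/64000)" by (simp_all add: power_abs[symmetric] power_divide abs_le_iff)
  have "\<bar>h\<bar>^4 \<le> (1/40)^4" by (rule power_mono[OF hw h0])
  then have p4: "0 \<le> h^4" "h^4 \<le> (1/2560000)" by (simp_all add: power_abs[symmetric] power_divide)
  have "\<bar>h\<bar>^5 \<le> (1/40)^5" by (rule power_mono[OF hw h0])
  then have p5: "- (1/102400000) \<le> h^5" "h^5 \<le> (1/102400000)" by (simp_all add: power_abs[symmetric] power_divide abs_le_iff)
  have "\<bar>h\<bar>^6 \<le> (1/40)^6" by (rule power_mono[OF hw h0])
  then have p6: "0 \<le> h^6" "h^6 \<le> (1/4096000000)" by (simp_all add: power_abs[symmetric] power_divide)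
  have "\<bar>h\<bar>^7 \<le> (1/40)^7" by (rule power_mono[OF hw h0])
  then have p7: "- (1/163840000000) \<le> h^7" "h^7 \<le> (1/163840000000)" by (simp_all add: power_abs[symmetric] power_divide abs_le_iff)
  have "\<bar>h\<bar>^8 \<le> (1/40)^8" by (rule power_mono[OF hw h0])
  then have p8: "0 \<le> h^8" "h^8 \<le> (1/6553600000000)" by (simp_all add: power_abs[symmetric] power_divide)
  have "\<bar>h\<bar>^9 \<le> (1/40)^9" by (rule power_mono[OF hw h0])
  then have p9: "- (1/262144000000000) \<le> h^9" "h^9 \<le> (1/262144000000000)" by (simp_all add: power_abs[symmetric] power_divide abs_le_iff)
  show ?thesis unfolding x e using h0 hw p1 p2 p3 p4 p5 p6 p7 p8 p9 by linarith
qed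

lemma fneg_2: fixes x :: real assumes "(-9/20) \<le> x" "x \<le> (-149/400)" shows "fpoly x < 0"
proof -
  define h where "h = x - (-9/20)"
  have x: "x = h + (-9/20)" by (simp add: h_def)
  have h0: "0 \<le> h" and hw: "h \<le> (31/400)" using assms by (simp_all add: h_def)
  have e: "fpoly (h + (-9/20)) = (- 66960387959/40960000000000) + (- 70249061641/2048000000000) * h + (- 36423409551/25600000000) * h^2 + (- 2668463509/1280000000) * h^3 + (5124552503/128000000) * h^4 + (- 453184767/6400000) * h^5 + (- 4783779/160000) * h^6 + (1257399/8000) * h^7 + (- 196911/1600) * h^8 + (2431/80) * h^9"
    unfolding fpoly_shift by (simp add: power_divide)
  have "h^2 \<le> (31/400)^2" by (rule power_mono[OF hw h0])
  then have p2: "0 \<le> h^2" "h^2 \<le> (961/160000)" using h0 by (simp_all add: power_divide)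
  have "h^3 \<le> (31/400)^3" by (rule power_mono[OF hw h0])
  then have p3: "0 \<le> h^3" "h^3 \<le> (29791/64000000)" using h0 by (simp_all add: power_divide)
  have "h^4 \<le> (31/400)^4" by (rule power_mono[OF hw h0])
  then have p4: "0 \<le> h^4" "h^4 \<le> (923521/25600000000)" using h0 by (simp_all add: power_divide)
  have "h^5 \<le> (31/400)^5" by (rule power_mono[OF hw h0])
  then have p5: "0 \<le> h^5" "h^5 \<le> (28629151/10240000000000)" using h0 by (simp_all add: power_divide)
  have "h^6 \<le> (31/400)^6" by (rule power_mono[OF hw h0])
  then have p6: "0 \<le> h^6" "h^6 \<le> (887503681/4096000000000000)" using h0 by (simp_all add: power_divide)
  have "h^7 \<le> (31/400)^7" by (rule power_mono[OF hw h0])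
  then have p7: "0 \<le> h^7" "h^7 \<le> (27512614111/1638400000000000000)" using h0 by (simp_all add: power_divide)
  have "h^8 \<le> (31/400)^8" by (rule power_mono[OF hw h0])
  then have p8: "0 \<le> h^8" "h^8 \<le> (852891037441/655360000000000000000)" using h0 by (simp_all add: power_divide)
  have "h^9 \<le> (31/400)^9" by (rule power_mono[OF hw h0])
  then have p9: "0 \<le> h^9" "h^9 \<le> (26439622160671/262144000000000000000000)" using h0 by (simp_all add: power_divide)
  show ?thesis unfolding x e using h0 hw p2 p3 p4 p5 p6 p7 p8 p9 by linarith
qed

lemma fneg_3: fixes x :: real assumes "(-149/400) \<le> x" "x \<le> (-7/40)" shows "fpoly x < 0"
proof -
  define h where "h = x - (-219/800)"
  have x: "x = h + (-219/800)" by (simp add: h_def)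
  have hw: "\<bar>h\<bar> \<le> (79/800)" unfolding h_def abs_le_iff using assms by linarith
  have h0: "0 \<le> \<bar>h\<bar>" by simp
  have e: "fpoly (h + (-219/800)) = (- 395966892187140211426988549/10737418240000000000000000000) + (- 2650231886292661215456361/13421772800000000000000000) * h + (4576435846047070743819/4194304000000000000000) * h^2 + (26648130375393129731/5242880000000000000) * h^3 + (- 181410375446503147/13107200000000000) * h^4 + (- 555978672046287/16384000000000) * h^5 + (726489354591/10240000000) * h^6 + (225658719/12800000) * h^7 + (- 4791501/64000) * h^8 + (2431/80) * h^9"
    unfolding fpoly_shift by (simp add: power_divide)
  have "\<bar>h\<bar>^1 \<le> (79/800)^1" by (rule power_mono[OF hw h0])
  then have p1: "- (79/800) \<le> h^1" "h^1 \<le> (79/800)" by (simp_all add: power_abs[symmetric] power_divide abs_le_iff)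
  have "\<bar>h\<bar>^2 \<le> (79/800)^2" by (rule power_mono[OF hw h0])
  then have p2: "0 \<le> h^2" "h^2 \<le> (6241/640000)" by (simp_all add: power_abs[symmetric] power_divide)
  have "\<bar>h\<bar>^3 \<le> (79/800)^3" by (rule power_mono[OF hw h0])
  then have p3: "- (493039/512000000) \<le> h^3" "h^3 \<le> (493039/512000000)" by (simp_all add: power_abs[symmetric] power_divide abs_le_iff)
  have "\<bar>h\<bar>^4 \<le> (79/800)^4" by (rule power_mono[OF hw h0])
  then have p4: "0 \<le> h^4" "h^4 \<le> (38950081/409600000000)" by (simp_all add: power_abs[symmetric] power_divide)
  have "\<bar>h\<bar>^5 \<le> (79/800)^5" by (rule power_mono[OF hw h0])
  then have p5: "- (3077056399/327680000000000) \<le> h^5" "h^5 \<le> (3077056399/327680000000000)" by (simp_all add: power_abs[symmetric] power_divide abs_le_iff)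
  have "\<bar>h\<bar>^6 \<le> (79/800)^6" by (rule power_mono[OF hw h0])
  then have p6: "0 \<le> h^6" "h^6 \<le> (243087455521/262144000000000000)" by (simp_all add: power_abs[symmetric] power_divide)
  have "\<bar>h\<bar>^7 \<le> (79/800)^7" by (rule power_mono[OF hw h0])
  then have p7: "- (19203908986159/209715200000000000000) \<le> h^7" "h^7 \<le> (19203908986159/209715200000000000000)" by (simp_all add: power_abs[symmetric] power_divide abs_le_iff)
  have "\<bar>h\<bar>^8 \<le> (79/800)^8" by (rule power_mono[OF hw h0])
  then have p8: "0 \<le> h^8" "h^8 \<le> (1517108809906561/167772160000000000000000)" by (simp_all add: power_abs[symmetric] power_divide)
  have "\<bar>h\<bar>^9 \<le> (79/800)^9" by (rule power_mono[OF hw h0])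
  then have p9: "- (119851595982618319/134217728000000000000000000) \<le> h^9" "h^9 \<le> (119851595982618319/134217728000000000000000000)" by (simp_all add: power_abs[symmetric] power_divide abs_le_iff)
  show ?thesis unfolding x e using h0 hw p1 p2 p3 p4 p5 p6 p7 p8 p9 by linarith
qed

lemma fneg_4: fixes x :: real assumes "(-7/40) \<le> x" "x \<le> (-9/400)" shows "fpoly x < 0"
proof -
  define h where "h = x - (-79/800)"
  have x: "x = h + (-79/800)" by (simp add: h_def)
  have hw: "\<bar>h\<bar> \<le> (61/800)" unfolding h_def abs_le_iff using assms by linarith
  have h0: "0 \<le> \<bar>h\<bar>" by simp
  have e: "fpoly (h + (-79/800)) = (- 292726748685562140604653489/10737418240000000000000000000) + (3572981201427533701808119/13421772800000000000000000) * h + (1685400186766986547239/4194304000000000000000) * h^2 + (- 38952219543040997429/5242880000000000000) * h^3 + (- 156262848572276047/13107200000000000) * h^4 + (540980352795393/16384000000000) * h^5 + (430324906011/10240000000) * h^6 + (- 687133161/12800000) * h^7 + (- 1728441/64000) * h^8 + (2431/80) * h^9"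
    unfolding fpoly_shift by (simp add: power_divide)
  have "\<bar>h\<bar>^1 \<le> (61/800)^1" by (rule power_mono[OF hw h0])
  then have p1: "- (61/800) \<le> h^1" "h^1 \<le> (61/800)" by (simp_all add: power_abs[symmetric] power_divide abs_le_iff)
  have "\<bar>h\<bar>^2 \<le> (61/800)^2" by (rule power_mono[OF hw h0])
  then have p2: "0 \<le> h^2" "h^2 \<le> (3721/640000)" by (simp_all add: power_abs[symmetric] power_divide)
  have "\<bar>h\<bar>^3 \<le> (61/800)^3" by (rule power_mono[OF hw h0])
  then have p3: "- (226981/512000000) \<le> h^3" "h^3 \<le> (226981/512000000)" by (simp_all add: power_abs[symmetric] power_divide abs_le_iff)
  have "\<bar>h\<bar>^4 \<le> (61/800)^4" by (rule power_mono[OF hw h0])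
  then have p4: "0 \<le> h^4" "h^4 \<le> (13845841/409600000000)" by (simp_all add: power_abs[symmetric] power_divide)
  have "\<bar>h\<bar>^5 \<le> (61/800)^5" by (rule power_mono[OF hw h0])
  then have p5: "- (844596301/327680000000000) \<le> h^5" "h^5 \<le> (844596301/327680000000000)" by (simp_all add: power_abs[symmetric] power_divide abs_le_iff)
  have "\<bar>h\<bar>^6 \<le> (61/800)^6" by (rule power_mono[OF hw h0])
  then have p6: "0 \<le> h^6" "h^6 \<le> (51520374361/262144000000000000)" by (simp_all add: power_abs[symmetric] power_divide)
  have "\<bar>h\<bar>^7 \<le> (61/800)^7" by (rule power_mono[OF hw h0])
  then have p7: "- (3142742836021/209715200000000000000) \<le> h^7" "h^7 \<le> (3142742836021/209715200000000000000)" by (simp_all add: power_abs[symmetric] power_divide abs_le_iff)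
  have "\<bar>h\<bar>^8 \<le> (61/800)^8" by (rule power_mono[OF hw h0])
  then have p8: "0 \<le> h^8" "h^8 \<le> (191707312997281/167772160000000000000000)" by (simp_all add: power_abs[symmetric] power_divide)
  have "\<bar>h\<bar>^9 \<le> (61/800)^9" by (rule power_mono[OF hw h0])
  then have p9: "- (11694146092834141/134217728000000000000000000) \<le> h^9" "h^9 \<le> (11694146092834141/134217728000000000000000000)" by (simp_all add: power_abs[symmetric] power_divide abs_le_iff)
  show ?thesis unfolding x e using h0 hw p1 p2 p3 p4 p5 p6 p7 p8 p9 by linarith
qed

lemma fneg_5: fixes x :: real assumes "(-9/400) \<le> x" "x \<le> (3/80)" shows "fpoly x < 0"
proof -
  define h where "h = x - (3/400)"
  have x: "x = h + (3/400)" by (simp add: h_def)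
  have hw: "\<bar>h\<bar> \<le> (3/100)" unfolding h_def abs_le_iff using assms by linarith
  have h0: "0 \<le> \<bar>h\<bar>" by simp
  have e: "fpoly (h + (3/400)) = (- 91714451524776060310627/20971520000000000000000000) + (3495143424225704508119/52428800000000000000000) * h + (- 75814096525961910627/32768000000000000000) * h^2 + (- 656750702145983821/81920000000000000) * h^3 + (4215918048416179/409600000000000) * h^4 + (46854654645393/1024000000000) * h^5 + (- 4322941623/1280000000) * h^6 + (- 205723089/3200000) * h^7 + (65637/32000) * h^8 + (2431/80) * h^9"
    unfolding fpoly_shift by (simp add: power_divide)
  have "\<bar>h\<bar>^1 \<le> (3/100)^1" by (rule power_mono[OF hw h0])
  then have p1: "- (3/100) \<le> h^1" "h^1 \<le> (3/100)" by (simp_all add: power_abs[symmetric] power_divide abs_le_iff)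
  have "\<bar>h\<bar>^2 \<le> (3/100)^2" by (rule power_mono[OF hw h0])
  then have p2: "0 \<le> h^2" "h^2 \<le> (9/10000)" by (simp_all add: power_abs[symmetric] power_divide)
  have "\<bar>h\<bar>^3 \<le> (3/100)^3" by (rule power_mono[OF hw h0])
  then have p3: "- (27/1000000) \<le> h^3" "h^3 \<le> (27/1000000)" by (simp_all add: power_abs[symmetric] power_divide abs_le_iff)
  have "\<bar>h\<bar>^4 \<le> (3/100)^4" by (rule power_mono[OF hw h0])
  then have p4: "0 \<le> h^4" "h^4 \<le> (81/100000000)" by (simp_all add: power_abs[symmetric] power_divide)
  have "\<bar>h\<bar>^5 \<le> (3/100)^5" by (rule power_mono[OF hw h0])
  then have p5: "- (243/10000000000) \<le> h^5" "h^5 \<le> (243/10000000000)" by (simp_all add: power_abs[symmetric] power_divide abs_le_iff)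
  have "\<bar>h\<bar>^6 \<le> (3/100)^6" by (rule power_mono[OF hw h0])
  then have p6: "0 \<le> h^6" "h^6 \<le> (729/1000000000000)" by (simp_all add: power_abs[symmetric] power_divide)
  have "\<bar>h\<bar>^7 \<le> (3/100)^7" by (rule power_mono[OF hw h0])
  then have p7: "- (2187/100000000000000) \<le> h^7" "h^7 \<le> (2187/100000000000000)" by (simp_all add: power_abs[symmetric] power_divide abs_le_iff)
  have "\<bar>h\<bar>^8 \<le> (3/100)^8" by (rule power_mono[OF hw h0])
  then have p8: "0 \<le> h^8" "h^8 \<le> (6561/10000000000000000)" by (simp_all add: power_abs[symmetric] power_divide)
  have "\<bar>h\<bar>^9 \<le> (3/100)^9" by (rule power_mono[OF hw h0])
  then have p9: "- (19683/1000000000000000000) \<le> h^9" "h^9 \<le> (19683/1000000000000000000)" by (simp_all add: power_abs[symmetric] power_divide abs_le_iff)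
  show ?thesis unfolding x e using h0 hw p1 p2 p3 p4 p5 p6 p7 p8 p9 by linarith
qed

lemma fneg_6: fixes x :: real assumes "(3/80) \<le> x" "x \<le> (63/400)" shows "fpoly x < 0"
proof -
  define h where "h = x - (3/80)"
  have x: "x = h + (3/80)" by (simp add: h_def)
  have h0: "0 \<le> h" and hw: "h \<le> (3/25)" using assms by (simp_all add: h_def)
  have e: "fpoly (h + (3/80)) = (- 50064912146429027/10737418240000000000) + (- 12415798813533481/134217728000000000) * h + (- 1244588012061027/419430400000000) * h^2 + (- 33416425151821/5242880000000) * h^3 + (2234791584179/131072000000) * h^4 + (71990862993/1638400000) * h^5 + (- 171594423/10240000) * h^6 + (- 8039889/128000) * h^7 + (65637/6400) * h^8 + (2431/80) * h^9"
    unfolding fpoly_shift by (simp add: power_divide)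
  have "h^2 \<le> (3/25)^2" by (rule power_mono[OF hw h0])
  then have p2: "0 \<le> h^2" "h^2 \<le> (9/625)" using h0 by (simp_all add: power_divide)
  have "h^3 \<le> (3/25)^3" by (rule power_mono[OF hw h0])
  then have p3: "0 \<le> h^3" "h^3 \<le> (27/15625)" using h0 by (simp_all add: power_divide)
  have "h^4 \<le> (3/25)^4" by (rule power_mono[OF hw h0])
  then have p4: "0 \<le> h^4" "h^4 \<le> (81/390625)" using h0 by (simp_all add: power_divide)
  have "h^5 \<le> (3/25)^5" by (rule power_mono[OF hw h0])
  then have p5: "0 \<le> h^5" "h^5 \<le> (243/9765625)" using h0 by (simp_all add: power_divide)
  have "h^6 \<le> (3/25)^6" by (rule power_mono[OF hw h0])
  then have p6: "0 \<le> h^6" "h^6 \<le> (729/244140625)" using h0 by (simp_all add: power_divide)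
  have "h^7 \<le> (3/25)^7" by (rule power_mono[OF hw h0])
  then have p7: "0 \<le> h^7" "h^7 \<le> (2187/6103515625)" using h0 by (simp_all add: power_divide)
  have "h^8 \<le> (3/25)^8" by (rule power_mono[OF hw h0])
  then have p8: "0 \<le> h^8" "h^8 \<le> (6561/152587890625)" using h0 by (simp_all add: power_divide)
  have "h^9 \<le> (3/25)^9" by (rule power_mono[OF hw h0])
  then have p9: "0 \<le> h^9" "h^9 \<le> (19683/3814697265625)" using h0 by (simp_all add: power_divide)
  show ?thesis unfolding x e using h0 hw p2 p3 p4 p5 p6 p7 p8 p9 by linarith
qed

lemma fneg_7: fixes x :: real assumes "(63/400) \<le> x" "x \<le> (19/50)" shows "fpoly x < 0"
proof -
  define h where "h = x - (43/160)"
  have x: "x = h + (43/160)" by (simp add: h_def)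
  have hw: "\<bar>h\<bar> \<le> (89/800)" unfolding h_def abs_le_iff using assms by linarith
  have h0: "0 \<le> \<bar>h\<bar>" by simp
  have e: "fpoly (h + (43/160)) = (- 1046638766645643768267/5497558138880000000000) + (- 39319066560423046121/34359738368000000000) * h + (107743703426688453/53687091200000000) * h^2 + (7795990229622499/335544320000000) * h^3 + (133429998662779/4194304000000) * h^4 + (- 833542540047/26214400000) * h^5 + (- 5858195343/81920000) * h^6 + (7507071/512000) * h^7 + (940797/12800) * h^8 + (2431/80) * h^9"
    unfolding fpoly_shift by (simp add: power_divide)
  have "\<bar>h\<bar>^1 \<le> (89/800)^1" by (rule power_mono[OF hw h0])
  then have p1: "- (89/800) \<le> h^1" "h^1 \<le> (89/800)" by (simp_all add: power_abs[symmetric] power_divide abs_le_iff)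
  have "\<bar>h\<bar>^2 \<le> (89/800)^2" by (rule power_mono[OF hw h0])
  then have p2: "0 \<le> h^2" "h^2 \<le> (7921/640000)" by (simp_all add: power_abs[symmetric] power_divide)
  have "\<bar>h\<bar>^3 \<le> (89/800)^3" by (rule power_mono[OF hw h0])
  then have p3: "- (704969/512000000) \<le> h^3" "h^3 \<le> (704969/512000000)" by (simp_all add: power_abs[symmetric] power_divide abs_le_iff)
  have "\<bar>h\<bar>^4 \<le> (89/800)^4" by (rule power_mono[OF hw h0])
  then have p4: "0 \<le> h^4" "h^4 \<le> (62742241/409600000000)" by (simp_all add: power_abs[symmetric] power_divide)
  have "\<bar>h\<bar>^5 \<le> (89/800)^5" by (rule power_mono[OF hw h0])
  then have p5: "- (5584059449/327680000000000) \<le> h^5" "h^5 \<le> (5584059449/327680000000000)" by (simp_all add: power_abs[symmetric] power_divide abs_le_iff)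
  have "\<bar>h\<bar>^6 \<le> (89/800)^6" by (rule power_mono[OF hw h0])
  then have p6: "0 \<le> h^6" "h^6 \<le> (496981290961/262144000000000000)" by (simp_all add: power_abs[symmetric] power_divide)
  have "\<bar>h\<bar>^7 \<le> (89/800)^7" by (rule power_mono[OF hw h0])
  then have p7: "- (44231334895529/209715200000000000000) \<le> h^7" "h^7 \<le> (44231334895529/209715200000000000000)" by (simp_all add: power_abs[symmetric] power_divide abs_le_iff)
  have "\<bar>h\<bar>^8 \<le> (89/800)^8" by (rule power_mono[OF hw h0])
  then have p8: "0 \<le> h^8" "h^8 \<le> (3936588805702081/167772160000000000000000)" by (simp_all add: power_abs[symmetric] power_divide)
  have "\<bar>h\<bar>^9 \<le> (89/800)^9" by (rule power_mono[OF hw h0])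
  then have p9: "- (350356403707485209/134217728000000000000000000) \<le> h^9" "h^9 \<le> (350356403707485209/134217728000000000000000000)" by (simp_all add: power_abs[symmetric] power_divide abs_le_iff)
  show ?thesis unfolding x e using h0 hw p1 p2 p3 p4 p5 p6 p7 p8 p9 by linarith
qed

lemma fneg_8: fixes x :: real assumes "(19/50) \<le> x" "x \<le> (199/400)" shows "fpoly x < 0"
proof -
  define h where "h = x - (19/50)"
  have x: "x = h + (19/50)" by (simp add: h_def)
  have h0: "0 \<le> h" and hw: "h \<le> (47/400)" using assms by (simp_all add: h_def)
  have e: "fpoly (h + (19/50)) = (- 40103207403879251/156250000000000000) + (964780537734039/3125000000000000) * h + (180168659970081/15625000000000) * h^2 + (9887256283431/312500000000) * h^3 + (30113090147/12500000000) * h^4 + (- 17366557887/250000000) * h^5 + (- 77768691/2500000) * h^6 + (4680819/50000) * h^7 + (415701/4000) * h^8 + (2431/80) * h^9"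
    unfolding fpoly_shift by (simp add: power_divide)
  have "h^2 \<le> (47/400)^2" by (rule power_mono[OF hw h0])
  then have p2: "0 \<le> h^2" "h^2 \<le> (2209/160000)" using h0 by (simp_all add: power_divide)
  have "h^3 \<le> (47/400)^3" by (rule power_mono[OF hw h0])
  then have p3: "0 \<le> h^3" "h^3 \<le> (103823/64000000)" using h0 by (simp_all add: power_divide)
  have "h^4 \<le> (47/400)^4" by (rule power_mono[OF hw h0])
  then have p4: "0 \<le> h^4" "h^4 \<le> (4879681/25600000000)" using h0 by (simp_all add: power_divide)
  have "h^5 \<le> (47/400)^5" by (rule power_mono[OF hw h0])
  then have p5: "0 \<le> h^5" "h^5 \<le> (229345007/10240000000000)" using h0 by (simp_all add: power_divide)
  have "h^6 \<le> (47/400)^6" by (rule power_mono[OF hw h0])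
  then have p6: "0 \<le> h^6" "h^6 \<le> (10779215329/4096000000000000)" using h0 by (simp_all add: power_divide)
  have "h^7 \<le> (47/400)^7" by (rule power_mono[OF hw h0])
  then have p7: "0 \<le> h^7" "h^7 \<le> (506623120463/1638400000000000000)" using h0 by (simp_all add: power_divide)
  have "h^8 \<le> (47/400)^8" by (rule power_mono[OF hw h0])
  then have p8: "0 \<le> h^8" "h^8 \<le> (23811286661761/655360000000000000000)" using h0 by (simp_all add: power_divide)
  have "h^9 \<le> (47/400)^9" by (rule power_mono[OF hw h0])
  then have p9: "0 \<le> h^9" "h^9 \<le> (1119130473102767/262144000000000000000000)" using h0 by (simp_all add: power_divide)
  show ?thesis unfolding x e using h0 hw p2 p3 p4 p5 p6 p7 p8 p9 by linarith
qed

lemma fneg_9: fixes x :: real assumes "(199/400) \<le> x" "x \<le> (1/2)" shows "fpoly x < 0"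
proof -
  define h where "h = x - (199/400)"
  have x: "x = h + (199/400)" by (simp add: h_def)
  have h0: "0 \<le> h" and hw: "h \<le> (1/400)" using assms by (simp_all add: h_def)
  have e: "fpoly (h + (199/400)) = (- 230837080702465552586631/20971520000000000000000000) + (224193997452972623735479/52428800000000000000000) * h + (711699951309376568721/32768000000000000000) * h^2 + (1878682659362189851/81920000000000000) * h^3 + (- 15588041493800153/409600000000000) * h^4 + (- 55381774289247/1024000000000) * h^5 + (115465899549/1280000000) * h^6 + (660510279/3200000) * h^7 + (4353921/32000) * h^8 + (2431/80) * h^9"
    unfolding fpoly_shift by (simp add: power_divide)
  have "h^2 \<le> (1/400)^2" by (rule power_mono[OF hw h0])
  then have p2: "0 \<le> h^2" "h^2 \<le> (1/160000)" using h0 by (simp_all add: power_divide)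
  have "h^3 \<le> (1/400)^3" by (rule power_mono[OF hw h0])
  then have p3: "0 \<le> h^3" "h^3 \<le> (1/64000000)" using h0 by (simp_all add: power_divide)
  have "h^4 \<le> (1/400)^4" by (rule power_mono[OF hw h0])
  then have p4: "0 \<le> h^4" "h^4 \<le> (1/25600000000)" using h0 by (simp_all add: power_divide)
  have "h^5 \<le> (1/400)^5" by (rule power_mono[OF hw h0])
  then have p5: "0 \<le> h^5" "h^5 \<le> (1/10240000000000)" using h0 by (simp_all add: power_divide)
  have "h^6 \<le> (1/400)^6" by (rule power_mono[OF hw h0])
  then have p6: "0 \<le> h^6" "h^6 \<le> (1/4096000000000000)" using h0 by (simp_all add: power_divide)
  have "h^7 \<le> (1/400)^7" by (rule power_mono[OF hw h0])
  then have p7: "0 \<le> h^7" "h^7 \<le> (1/1638400000000000000)" using h0 by (simp_all add: power_divide)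
  have "h^8 \<le> (1/400)^8" by (rule power_mono[OF hw h0])
  then have p8: "0 \<le> h^8" "h^8 \<le> (1/655360000000000000000)" using h0 by (simp_all add: power_divide)
  have "h^9 \<le> (1/400)^9" by (rule power_mono[OF hw h0])
  then have p9: "0 \<le> h^9" "h^9 \<le> (1/262144000000000000000000)" using h0 by (simp_all add: power_divide)
  show ?thesis unfolding x e using h0 hw p2 p3 p4 p5 p6 p7 p8 p9 by linarith
qed

lemma fneg: fixes x :: real assumes "(-29/50) \<le> x" "x \<le> (1/2)" shows "fpoly x < 0"
proof -
  have "((-29/50) \<le> x \<and> x \<le> (-1/2)) \<or> ((-1/2) \<le> x \<and> x \<le> (-9/20)) \<or> ((-9/20) \<le> x \<and> x \<le> (-149/400)) \<or> ((-149/400) \<le> x \<and> x \<le> (-7/40)) \<or> ((-7/40) \<le> x \<and> x \<le> (-9/400)) \<or> ((-9/400) \<le> x \<and> x \<le> (3/80)) \<or> ((3/80) \<le> x \<and> x \<le> (63/400)) \<or> ((63/400) \<le> x \<and> x \<le> (19/50)) \<or> ((19/50) \<le> x \<and> x \<le> (199/400)) \<or> ((199/400) \<le> x \<and> x \<le> (1/2))" using assms by linarith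
  then show ?thesis using fneg_0 fneg_1 fneg_2 fneg_3 fneg_4 fneg_5 fneg_6 fneg_7 fneg_8 fneg_9 by blast
qed
lemma fdneg_0: fixes x :: real assumes "(-3/5) \<le> x" "x \<le> (-29/50)" shows "fpd x < 0"
proof -
  define h where "h = x - (-3/5)"
  have x: "x = h + (-3/5)" by (simp add: h_def)
  have h0: "0 \<le> h" and hw: "h \<le> (1/50)" using assms by (simp_all add: h_def)
  have e: "fpd (h + (-3/5)) = (- 859366/1953125) + (21222429/1562500) * h + (- 68780301/625000) * h^2 + (14958517/62500) * h^3 + (2778111/10000) * h^4 + (- 1054053/625) * h^5 + (288288/125) * h^6 + (- 65637/50) * h^7 + (21879/80) * h^8"
    unfolding fpd_shift by (simp add: power_divide)
  have "h^2 \<le> (1/50)^2" by (rule power_mono[OF hw h0])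
  then have p2: "0 \<le> h^2" "h^2 \<le> (1/2500)" using h0 by (simp_all add: power_divide)
  have "h^3 \<le> (1/50)^3" by (rule power_mono[OF hw h0])
  then have p3: "0 \<le> h^3" "h^3 \<le> (1/125000)" using h0 by (simp_all add: power_divide)
  have "h^4 \<le> (1/50)^4" by (rule power_mono[OF hw h0])
  then have p4: "0 \<le> h^4" "h^4 \<le> (1/6250000)" using h0 by (simp_all add: power_divide)
  have "h^5 \<le> (1/50)^5" by (rule power_mono[OF hw h0])
  then have p5: "0 \<le> h^5" "h^5 \<le> (1/312500000)" using h0 by (simp_all add: power_divide)
  have "h^6 \<le> (1/50)^6" by (rule power_mono[OF hw h0])
  then have p6: "0 \<le> h^6" "h^6 \<le> (1/15625000000)" using h0 by (simp_all add: power_divide)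
  have "h^7 \<le> (1/50)^7" by (rule power_mono[OF hw h0])
  then have p7: "0 \<le> h^7" "h^7 \<le> (1/781250000000)" using h0 by (simp_all add: power_divide)
  have "h^8 \<le> (1/50)^8" by (rule power_mono[OF hw h0])
  then have p8: "0 \<le> h^8" "h^8 \<le> (1/39062500000000)" using h0 by (simp_all add: power_divide)
  show ?thesis unfolding x e using h0 hw p2 p3 p4 p5 p6 p7 p8 by linarith
qed

lemma fdneg: fixes x :: real assumes "(-3/5) \<le> x" "x \<le> (-29/50)" shows "fpd x < 0"
proof -
  have "((-3/5) \<le> x \<and> x \<le> (-29/50))" using assms by linarith
  then show ?thesis using fdneg_0 by blast
qed
lemma fpoly_deriv: "(fpoly has_real_derivative fpd x) (at x)"
  unfolding fpoly_def[abs_def] fpd_def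
  by (rule derivative_eq_intros refl | simp add: algebra_simps)+

lemma t0_bounds: "29/50 \<le> t0 \<and> t0 \<le> 3/5"
proof -
  have cont: "continuous_on {-3/5..-29/50} fpoly" unfolding fpoly_def by (intro continuous_intros) auto
  have f1: "fpoly (-29/50) \<le> 0" using fneg[of "-29/50"] by simp
  have f2: "0 \<le> fpoly (-3/5)" using fpos[of "-3/5"] by simp
  obtain s where s: "-3/5 \<le> s" "s \<le> -29/50" "fpoly s = 0"
    using IVT2'[of fpoly "-29/50" 0 "-3/5", OF f1 f2 _ cont] by auto
  have decr: "fpoly v < fpoly u" if "-3/5 \<le> u" "u < v" "v \<le> -29/50" for u v
    using DERIV_neg_imp_decreasing[of u v fpoly] fpoly_deriv fdneg that by force
  have uniq: "r = s" if r: "r \<in> {-1..1/2} \<and> fpoly r = 0" for r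
  proof -
    have "\<not> r < -3/5" using fpos[of r] r by auto
    moreover have "\<not> -29/50 < r" using fneg[of r] r by auto
    ultimately show ?thesis using decr[of r s] decr[of s r] s r by force
  qed
  have "(THE s. s \<in> {-1..1/2} \<and> fpoly s = 0) = s"
    by (rule the_equality) (use s uniq in auto)
  then show ?thesis unfolding t0_def using s by simp
qed
lemma cos72: "3/10 \<le> cos (2*pi/5)"
proof -
  define C where "C = cos (pi/5)"
  have C0: "0 < C" unfolding C_def by (rule cos_gt_zero) (use pi_gt_zero in auto)
  have "cos (3*(pi/5)) = cos (pi - 2*(pi/5))" by (simp add: field_simps)
  also have "\<dots> = - cos (2*(pi/5))" by (rule cos_pi_minus)
  finally have "4 * C^3 - 3*C = - (2*C^2 - 1)" unfolding C_def cos_treble_cos cos_double_cos .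
  then have "(C + 1) * (4*C^2 - 2*C - 1) = 0" by (simp add: algebra_simps power2_eq_square power3_eq_cube)
  with C0 have q: "4*C^2 - 2*C - 1 = 0" by simp
  have "4/5 \<le> C"
  proof (rule ccontr)
    assume "\<not> 4/5 \<le> C"
    then have "C*C \<le> (4/5)*C" using C0 by (intro mult_right_mono) auto
    moreover have "4*(C*C) - 2*C - 1 = 0" using q by (simp add: power2_eq_square)
    ultimately show False using \<open>\<not> 4/5 \<le> C\<close> C0 by linarith
  qed
  moreover have "cos (2*pi/5) = 2*C^2 - 1" unfolding C_def using cos_double_cos[of "pi/5"] by simp
  ultimately show ?thesis using q by linarith
qed

lemma spread:
  fixes S :: "real set"
  assumes "finite S" "card S = Suc n" "\<forall>x\<in>S. \<forall>y\<in>S. x \<noteq> y \<longrightarrow> d < \<bar>x - y\<bar>"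
  shows "real n * d \<le> Max S - Min S"
  using assms
proof (induction n arbitrary: S)
  case 0
  then have "S \<noteq> {}" by auto
  then show ?case using 0 by simp
next
  case (Suc n)
  have ne: "S \<noteq> {}" using Suc.prems by auto
  define M where "M = Max S"
  have MS: "M \<in> S" unfolding M_def using Suc.prems ne by simp
  define S' where "S' = S - {M}"
  have fin': "finite S'" "card S' = Suc n" using Suc.prems MS by (auto simp: S'_def)
  have ne': "S' \<noteq> {}" using fin' by auto
  have sub: "S' \<subseteq> S" by (auto simp: S'_def)
  have IH: "real n * d \<le> Max S' - Min S'"
    using Suc.IH[OF fin'] Suc.prems(3) sub by blast
  have M'S: "Max S' \<in> S'" using fin' ne' by simp
  then have "Max S' \<noteq> M" "Max S' \<in> S" by (auto simp: S'_def)
  moreover have "Max S' \<le> M" unfolding M_def using Suc.prems(1) \<open>Max S' \<in> S\<close> by simp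
  ultimately have "d < M - Max S'" using Suc.prems(3) MS by force
  moreover have "Min S \<le> Min S'" using Min_antimono[OF sub ne' Suc.prems(1)] .
  ultimately show ?case using IH unfolding M_def by (simp add: algebra_simps)
qed

lemma planar5:
  fixes w :: "nat \<Rightarrow> complex"
  shows "\<exists>i<5. \<exists>j<5. i \<noteq> j \<and> cos (2*pi/5) * (cmod (w i) * cmod (w j)) \<le> Re (w i * cnj (w j))"
proof -
  define th where "th i = Arg (w i)" for i
  have key: "Re (w i * cnj (w j)) = cmod (w i) * cmod (w j) * cos (th i - th j)" for i j
  proof -
    have "w i * cnj (w j) = rcis (cmod (w i)) (th i) * rcis (cmod (w j)) (- th j)"
      unfolding th_def rcis_cmod_Arg rcis_cnj[symmetric] ..
    also have "\<dots> = rcis (cmod (w i) * cmod (w j)) (th i - th j)" by (simp add: rcis_mult)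
    finally show ?thesis by simp
  qed
  have thb: "- pi < th i" "th i \<le> pi" for i unfolding th_def by (rule mpi_less_Arg, rule Arg_le_pi)
  have "\<exists>i<5. \<exists>j<5. i \<noteq> j \<and> (\<bar>th i - th j\<bar> \<le> 2*pi/5 \<or> 8*pi/5 \<le> \<bar>th i - th j\<bar>)"
  proof (rule ccontr)
    assume "\<not> ?thesis"
    then have sep: "\<And>i j. i < 5 \<Longrightarrow> j < 5 \<Longrightarrow> i \<noteq> j \<Longrightarrow> 2*pi/5 < \<bar>th i - th j\<bar> \<and> \<bar>th i - th j\<bar> < 8*pi/5"
      by force
    define S where "S = th ` {..<5}"
    have inj: "inj_on th {..<5}"
    proof (rule inj_onI)
      fix i j assume "i \<in> {..<5::nat}" "j \<in> {..<5::nat}" "th i = th j"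
      then show "i = j" using sep[of i j] pi_gt_zero by (cases "i = j") auto
    qed
    have finS: "finite S" and cardS: "card S = Suc 4" unfolding S_def using card_image[OF inj] by auto
    have sepS: "\<forall>x\<in>S. \<forall>y\<in>S. x \<noteq> y \<longrightarrow> 2*pi/5 < \<bar>x - y\<bar>"
      unfolding S_def using sep by fastforce
    have sp: "real 4 * (2*pi/5) \<le> Max S - Min S" by (rule spread[OF finS cardS sepS])
    have neS: "S \<noteq> {}" using cardS by auto
    obtain i where i: "i < 5" "th i = Max S" using Max_in[OF finS neS] unfolding S_def by auto
    obtain j where j: "j < 5" "th j = Min S" using Min_in[OF finS neS] unfolding S_def by auto
    have "i \<noteq> j"
    proof
      assume "i = j"
      then have "Max S - Min S = 0" using i j by simp
      with sp pi_gt_zero show False by simp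
    qed
    moreover have "0 \<le> Max S - Min S" using sp pi_gt_zero by linarith
    then have "\<bar>Max S - Min S\<bar> = Max S - Min S" by simp
    ultimately show False using sep[OF i(1) j(1)] i j sp by auto
  qed
  then obtain i j where ij: "i < 5" "j < 5" "i \<noteq> j" and d: "\<bar>th i - th j\<bar> \<le> 2*pi/5 \<or> 8*pi/5 \<le> \<bar>th i - th j\<bar>"
    by blast
  have "cos (2*pi/5) \<le> cos (th i - th j)"
    using d
  proof
    assume a: "\<bar>th i - th j\<bar> \<le> 2*pi/5"
    have b: "0 \<le> \<bar>th i - th j\<bar>" "\<bar>th i - th j\<bar> \<le> pi" "0 \<le> 2*pi/5" "2*pi/5 \<le> pi"
      using a pi_gt_zero by (simp, linarith+)
    have "cos (2*pi/5) \<le> cos \<bar>th i - th j\<bar>"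
      using cos_mono_le_eq[OF b(3,4) b(1,2)] a by blast
    then show ?thesis by simp
  next
    assume a: "8*pi/5 \<le> \<bar>th i - th j\<bar>"
    have lt: "\<bar>th i - th j\<bar> < 2*pi" using thb[of i] thb[of j] by linarith
    have b: "0 \<le> 2*pi - \<bar>th i - th j\<bar>" "2*pi - \<bar>th i - th j\<bar> \<le> pi" "0 \<le> 2*pi/5" "2*pi/5 \<le> pi"
      "2*pi - \<bar>th i - th j\<bar> \<le> 2*pi/5"
      using a lt pi_gt_zero by linarith+
    have "cos (2*pi/5) \<le> cos (2*pi - \<bar>th i - th j\<bar>)"
      using cos_mono_le_eq[OF b(3,4) b(1,2)] b(5) by blast
    then show ?thesis by simp
  qed
  then have "cos (2*pi/5) * (cmod (w i) * cmod (w j)) \<le> cos (th i - th j) * (cmod (w i) * cmod (w j))"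
    by (intro mult_right_mono) auto
  then show ?thesis using ij key[of i j] by (metis mult.commute)
qed

lemma ineq:
  fixes x y c :: real
  assumes x: "29/50 < x" "x \<le> 1" and y: "29/50 < y" "y \<le> 1" and c: "3/10 \<le> c"
  shows "1/2 < x*y + c * (sqrt (1 - x^2) * sqrt (1 - y^2))"
proof -
  define p where "p = x*y"
  have hx2: "x^2 \<le> 1" using x power_le_one[of x 2] by simp
  have hy2: "y^2 \<le> 1" using y power_le_one[of y 2] by simp
  have sx: "0 \<le> 1 - x^2" using hx2 by simp
  have sy: "0 \<le> 1 - y^2" using hy2 by simp
  have c0: "0 \<le> c" using c by linarith
  have nn: "0 \<le> c * (sqrt (1 - x^2) * sqrt (1 - y^2))"
    by (rule mult_nonneg_nonneg[OF c0 mult_nonneg_nonneg[OF real_sqrt_ge_zero[OF sx] real_sqrt_ge_zero[OF sy]]])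
  show ?thesis
  proof (cases "1/2 < p")
    case True then show ?thesis using nn p_def by linarith
  next
    case False
    have "(29/50)^2 \<le> x^2" by (rule power_mono) (use x in auto)
    moreover have "(29/50)^2 \<le> y^2" by (rule power_mono) (use y in auto)
    ultimately have t2: "841/2500 \<le> x^2" "841/2500 \<le> y^2" by (simp_all add: power_divide)
    have prod: "0 \<le> (x^2 - 841/2500) * (y^2 - 841/2500)" using t2 by simp
    have pl: "841/2500 \<le> p" unfolding p_def
      using mult_mono[of "29/50" x "29/50" y] x y by auto
    have Q: "1 - (p^2 + (841/2500)^2)/(841/2500) + p^2 \<le> (1 - x^2) * (1 - y^2)"
      using prod unfolding p_def by (simp add: algebra_simps power2_eq_square field_simps)
    have cc: "0 \<le> (p - 841/2500) * (1/2 - p)" using pl False by simp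
    have G: "(1/2 - p)^2 < (9/100) * (1 - (p^2 + (841/2500)^2)/(841/2500) + p^2)"
      using cc pl False by (simp add: algebra_simps power2_eq_square field_simps) linarith?
    have "(3/10)^2 \<le> c^2" by (rule power_mono) (use c in auto)
    then have c2: "9/100 \<le> c^2" by (simp add: power_divide)
    have "(1/2 - p)^2 < c^2 * ((1 - x^2) * (1 - y^2))"
    proof -
      have "(9/100) * (1 - (p^2 + (841/2500)^2)/(841/2500) + p^2) \<le> (9/100) * ((1 - x^2) * (1 - y^2))"
        by (rule mult_left_mono[OF Q]) simp
      also have "\<dots> \<le> c^2 * ((1 - x^2) * (1 - y^2))" using c2 sx sy by (intro mult_right_mono) auto
      finally show ?thesis using G by linarith
    qed
    also have "\<dots> = (c * (sqrt (1 - x^2) * sqrt (1 - y^2)))^2"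
      by (simp only: power_mult_distrib real_sqrt_pow2[OF sx] real_sqrt_pow2[OF sy])
    finally have "1/2 - p < c * (sqrt (1 - x^2) * sqrt (1 - y^2))"
      using nn by (rule power2_less_imp_less)
    then show ?thesis unfolding p_def by linarith
  qed
qed

lemma basis3:
  fixes e :: "real^3"
  assumes "norm e = 1"
  obtains b1 b2 where "b1 \<bullet> b1 = 1" "b2 \<bullet> b2 = 1" "b1 \<bullet> b2 = 0" "e \<bullet> b1 = 0" "e \<bullet> b2 = 0"
    "\<And>v. v = (v \<bullet> e) *\<^sub>R e + (v \<bullet> b1) *\<^sub>R b1 + (v \<bullet> b2) *\<^sub>R b2"
proof -
  let ?S = "{x. e \<bullet> x = 0}"
  have e0: "e \<noteq> 0" using assms by auto
  have ee: "e \<bullet> e = 1" using assms by (simp add: norm_eq_1)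
  obtain B where B: "B \<subseteq> ?S" "pairwise orthogonal B" "\<And>x. x \<in> B \<Longrightarrow> norm x = 1"
      "independent B" "card B = dim ?S" "span B = ?S"
    using orthonormal_basis_subspace[OF subspace_hyperplane] by blast
  have "dim ?S = 2" using dim_hyperplane[OF e0] by simp
  then obtain b1 b2 where b: "B = {b1,b2}" "b1 \<noteq> b2" using B(5) card_2_iff by metis
  have o12: "b1 \<bullet> b2 = 0" using B(2) b unfolding pairwise_def orthogonal_def by auto
  have n1: "b1 \<bullet> b1 = 1" "b2 \<bullet> b2 = 1" using B(3) b by (auto simp: norm_eq_1)
  have eb: "e \<bullet> b1 = 0" "e \<bullet> b2 = 0" using B(1) b by auto
  have dec: "v = (v \<bullet> e) *\<^sub>R e + (v \<bullet> b1) *\<^sub>R b1 + (v \<bullet> b2) *\<^sub>R b2" for v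
  proof -
    define q where "q = v - (v \<bullet> e) *\<^sub>R e - (v \<bullet> b1) *\<^sub>R b1 - (v \<bullet> b2) *\<^sub>R b2"
    have "e \<bullet> q = 0" unfolding q_def using ee eb
      by (simp add: inner_diff_right inner_commute)
    then have qS: "q \<in> span B" using B(6) by simp
    have o21: "b2 \<bullet> b1 = 0" using o12 by (simp add: inner_commute)
    have "q \<bullet> b1 = 0" "q \<bullet> b2 = 0" unfolding q_def using n1 o12 o21 eb
      by (simp_all add: inner_diff_left)
    then have "\<And>z. z \<in> B \<Longrightarrow> orthogonal q z" using b by (auto simp: orthogonal_def)
    then have "orthogonal q q" using orthogonal_to_span[OF qS] by blast
    then have "q = 0" by (simp add: orthogonal_def)
    then show ?thesis unfolding q_def by (simp add: algebra_simps)
  qed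
  show ?thesis using that[OF n1 o12 eb dec] .
qed

theorem mainTheorem5:
  fixes e0 :: "real^3" and y :: "nat \<Rightarrow> real^3" and m :: nat
  assumes "e0 \<in> S2"
    and "\<And>i. i < m \<Longrightarrow> y i \<in> S2"
    and "\<And>i j. i < m \<Longrightarrow> j < m \<Longrightarrow> i \<noteq> j \<Longrightarrow> sdist (y i) (y j) \<ge> pi/3"
    and "\<And>i. i < m \<Longrightarrow> sdist e0 (y i) < theta0"
  shows "m \<le> 4"
proof (rule ccontr)
  assume "\<not> m \<le> 4"
  then have m5: "\<And>i. i < 5 \<Longrightarrow> i < m" by auto
  have tb: "29/50 \<le> t0" "t0 \<le> 3/5" using t0_bounds by auto
  have ne: "norm e0 = 1" using assms(1) by (simp add: S2_def)
  have ny: "norm (y i) = 1" if "i < 5" for i using assms(2)[OF m5[OF that]] by (simp add: S2_def)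
  have inner_le: "\<bar>u \<bullet> v\<bar> \<le> 1" if "norm u = 1" "norm v = 1" for u v :: "real^3"
    using Cauchy_Schwarz_ineq2[of u v] that by simp
  define a where "a i = e0 \<bullet> y i" for i
  have a_gt: "t0 < a i" "a i \<le> 1" if "i < 5" for i
  proof -
    have "arccos (a i) < arccos t0" using assms(4)[OF m5[OF that]] unfolding sdist_def theta0_def a_def .
    moreover have "\<bar>a i\<bar> \<le> 1" unfolding a_def using inner_le[OF ne ny[OF that]] .
    moreover have "\<bar>t0\<bar> \<le> 1" using tb by simp
    ultimately show "t0 < a i" "a i \<le> 1" using arccos_less_mono by auto
  qed
  have yy: "y i \<bullet> y j \<le> 1/2" if "i < 5" "j < 5" "i \<noteq> j" for i j
  proof -
    have "pi/3 \<le> arccos (y i \<bullet> y j)" using assms(3)[OF m5[OF that(1)] m5[OF that(2)] that(3)] unfolding sdist_def .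
    moreover have "arccos (1/2) = pi/3" using arccos_cos[of "pi/3"] cos_60 pi_gt_zero by simp
    moreover have "\<bar>y i \<bullet> y j\<bar> \<le> 1" using inner_le[OF ny[OF that(1)] ny[OF that(2)]] .
    ultimately show ?thesis using arccos_le_mono[of "1/2" "y i \<bullet> y j"] by simp
  qed
  obtain b1 b2 where b: "b1 \<bullet> b1 = 1" "b2 \<bullet> b2 = 1" "b1 \<bullet> b2 = 0" "e0 \<bullet> b1 = 0" "e0 \<bullet> b2 = 0"
    and dec: "\<And>v. v = (v \<bullet> e0) *\<^sub>R e0 + (v \<bullet> b1) *\<^sub>R b1 + (v \<bullet> b2) *\<^sub>R b2"
    using basis3[OF ne] by blast
  have expand: "u \<bullet> v = (u \<bullet> e0) * (e0 \<bullet> v) + (u \<bullet> b1) * (b1 \<bullet> v) + (u \<bullet> b2) * (b2 \<bullet> v)" for u v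
  proof -
    have "u \<bullet> v = ((u \<bullet> e0) *\<^sub>R e0 + (u \<bullet> b1) *\<^sub>R b1 + (u \<bullet> b2) *\<^sub>R b2) \<bullet> v" using dec[of u] by simp
    also have "\<dots> = (u \<bullet> e0) * (e0 \<bullet> v) + (u \<bullet> b1) * (b1 \<bullet> v) + (u \<bullet> b2) * (b2 \<bullet> v)"
      by (simp add: inner_add_left)
    finally show ?thesis .
  qed
  define w where "w i = Complex (y i \<bullet> b1) (y i \<bullet> b2)" for i
  have cm: "cmod (w i) = sqrt (1 - (a i)^2)" if "i < 5" for i
  proof -
    have "1 = y i \<bullet> y i" using ny[OF that] by (simp add: norm_eq_1)
    also have "\<dots> = (a i)^2 + (y i \<bullet> b1)^2 + (y i \<bullet> b2)^2"
      using expand[of "y i" "y i"] unfolding a_def by (simp add: inner_commute power2_eq_square)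
    finally show ?thesis unfolding w_def by (simp add: complex_norm)
  qed
  have re: "Re (w i * cnj (w j)) = (y i \<bullet> b1) * (y j \<bullet> b1) + (y i \<bullet> b2) * (y j \<bullet> b2)" for i j
    unfolding w_def by simp
  obtain i j where ij: "i < 5" "j < 5" "i \<noteq> j"
    and c: "cos (2*pi/5) * (cmod (w i) * cmod (w j)) \<le> Re (w i * cnj (w j))"
    using planar5[of w] by blast
  have "y i \<bullet> y j = a i * a j + Re (w i * cnj (w j))"
    using expand[of "y i" "y j"] unfolding re a_def by (simp add: inner_commute)
  also have "\<dots> \<ge> a i * a j + cos (2*pi/5) * (sqrt (1 - (a i)^2) * sqrt (1 - (a j)^2))"
    using c cm[OF ij(1)] cm[OF ij(2)] by simp
  finally have "a i * a j + cos (2*pi/5) * (sqrt (1 - (a i)^2) * sqrt (1 - (a j)^2)) \<le> y i \<bullet> y j" .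
  moreover have "1/2 < a i * a j + cos (2*pi/5) * (sqrt (1 - (a i)^2) * sqrt (1 - (a j)^2))"
    using ineq[of "a i" "a j" "cos (2*pi/5)"] a_gt[OF ij(1)] a_gt[OF ij(2)] tb cos72 by linarith
  ultimately show False using yy[OF ij] by linarith
qed

end
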